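(* Let $M := \langle x,y,z \mid (xy,\, yzx)\rangle$. (1) For all $k,l\in\mathbb{N}^+$, $\mathsf{L}_M(x^ky^l) = [k+l,\ 2(k+l)-1]$. (2) For all $k,l\in\mathbb{N}^+$, $\rho(\mathsf{L}_M(x^ky^l)) = 2 - \frac{1}{k+l}$. (3) For every integer $n\ge 2$ and all $k,l\in\mathbb{N}^+$ with $k+l=n$, one has $\rho(\mathsf{L}_M(a)) \le \rho(\mathsf{L}_M(x^ky^l))$ for every word $a\in\langle x,y,z\rangle$ with $|a| = n$.
   Context: $\langle x,y,z\rangle$ is the free monoid on $\{x,y,z\}$, and $M$ is the monoid with generators $x,y,z$ subject to the single relation $xy = yzx$. $|a|$ is word length; $a=_M b$ means equal images in $M$; $\mathsf{L}_M(a):=\{|b| : b\in\langle x,y,z\rangle,\ b=_M a\}$. $[s,t]$ denotes the set of integers between $s$ and $t$. For $L\subseteq\mathbb{N}$ with $L\cap\mathbb{N}^+\neq\emptyset$, $\rho(L):=\sup(L\cap\mathbb{N}^+)/\min(L\cap\mathbb{N}^+)$. *)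

theory Defs
  imports Main "HOL-Library.Extended_Real"
begin

datatype letter = X | Y | Z

type_synonym word = "letter list"

definition step :: "(word \<times> word) set" where
  "step = {(u @ [X, Y] @ v, u @ [Y, Z, X] @ v) | u v. True}"

text \<open>Equality in M = <x,y,z | xy = yzx>: the congruence generated by the relation,
  i.e. the reflexive-symmetric-transitive closure of the elementary steps.\<close>
definition eqM :: "word \<Rightarrow> word \<Rightarrow> bool" where
  "eqM a b \<longleftrightarrow> (a, b) \<in> (step \<union> step\<inverse>)\<^sup>*"

definition LM :: "word \<Rightarrow> nat set" where
  "LM a = {length b | b. eqM b a}"

text \<open>Elasticity rho(L) = sup(L \<inter> N+) / min(L \<inter> N+), valued in the extended reals
  (the supremum may be infinite).\<close>
definition rho :: "nat set \<Rightarrow> ereal" where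
  "rho L = (SUP n\<in>L \<inter> {0<..}. ereal (real n)) / ereal (real (Inf (L \<inter> {0<..})))"

end

theory Submission
  imports Defs
begin

fun segs :: "word \<Rightarrow> word list" where
  "segs [] = [[]]"
| "segs (c # w) = (if c = Z then [] # segs w else (c # hd (segs w)) # tl (segs w))"

lemma segs_ne: "segs w \<noteq> []"
  by (induction w) auto

lemma segs_app: "segs (u @ Z # v) = segs u @ segs v"
proof (induction u)
  case Nil then show ?case by simp
next
  case (Cons c u)
  have "segs u \<noteq> []" by (rule segs_ne)
  then show ?case using Cons by (cases "segs u") auto
qed

lemma segs_free: "Z \<notin> set s \<Longrightarrow> segs s = [s]"
  by (induction s) auto

definition core :: "word \<Rightarrow> word" where
  "core s = dropWhile (\<lambda>c. c \<noteq> Y) (rev (dropWhile (\<lambda>c. c \<noteq> X) s))"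

definition tseg :: "word \<Rightarrow> nat" where
  "tseg s = length (core s) - 1"

definition tt :: "word \<Rightarrow> nat" where
  "tt w = sum_list (map tseg (segs w))"

lemma tt_app: "tt (u @ Z # v) = tt u + tt v"
  by (simp add: tt_def segs_app)

lemma tt_free: "Z \<notin> set s \<Longrightarrow> tt s = tseg s"
  by (simp add: tt_def segs_free)

definition AA :: "word \<Rightarrow> nat" where "AA u = length (dropWhile (\<lambda>c. c \<noteq> X) u)"
definition BB :: "word \<Rightarrow> nat" where "BB v = length (dropWhile (\<lambda>c. c \<noteq> Y) (rev v))"

lemma dw_notin: "x \<notin> set u \<Longrightarrow> dropWhile (\<lambda>c. c \<noteq> x) (u @ w) = dropWhile (\<lambda>c. c \<noteq> x) w"
  by (rule dropWhile_append2) blast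

lemma dw_notin0: "x \<notin> set u \<Longrightarrow> dropWhile (\<lambda>c. c \<noteq> x) u = []"
  by (simp add: dropWhile_eq_Nil_conv) blast

lemma core1: "length (core (u @ X # Y # v)) = AA u + 2 + BB v"
proof -
  obtain D where D: "dropWhile (\<lambda>c. c \<noteq> X) (u @ X # Y # v) = D @ X # Y # v" "length D = AA u"
  proof (cases "X \<in> set u")
    case True then show ?thesis using that by (auto simp: AA_def dropWhile_append1)
  next
    case False then show ?thesis using that[of "[]"] by (simp add: AA_def dw_notin dw_notin0)
  qed
  have "length (dropWhile (\<lambda>c. c \<noteq> Y) (rev v @ [Y, X] @ rev D)) = BB v + 2 + length D"
  proof (cases "Y \<in> set (rev v)")
    case True then show ?thesis by (auto simp: BB_def dropWhile_append1)
  next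
    case False then show ?thesis by (simp add: BB_def dw_notin dw_notin0 del: set_rev)
  qed
  then show ?thesis using D by (simp add: core_def)
qed

lemma core2: "length (core (u @ [Y])) = (if AA u = 0 then 0 else AA u + 1)"
proof (cases "X \<in> set u")
  case True
  then obtain D where "dropWhile (\<lambda>c. c \<noteq> X) u = D" "D \<noteq> []" by auto
  then show ?thesis using True by (auto simp: core_def AA_def dropWhile_append1)
next
  case False then show ?thesis by (simp add: core_def AA_def dw_notin dw_notin0)
qed

lemma core3: "length (core (X # v)) = (if BB v = 0 then 0 else BB v + 1)"
proof (cases "Y \<in> set v")
  case True
  then have "Y \<in> set (rev v)" by simp
  then show ?thesis by (auto simp: core_def BB_def dropWhile_append1)
next
  case False
  then have "Y \<notin> set (rev v)" by simp
  then show ?thesis by (simp add: core_def BB_def dw_notin dw_notin0 del: set_rev)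
qed

lemma tseg_step: "tseg (u @ X # Y # v) = Suc (tseg (u @ [Y]) + tseg (X # v))"
  by (simp add: tseg_def core1 core2 core3)


lemma split_last_Z: "\<exists>u0. Z \<notin> set u0 \<and> (u = u0 \<or> (\<exists>u1. u = u1 @ Z # u0))"
  by (metis split_list_last)

lemma split_first_Z: "\<exists>v0. Z \<notin> set v0 \<and> (v = v0 \<or> (\<exists>v1. v = v0 @ Z # v1))"
  by (metis split_list_first)

lemma tt_free_step: "Z \<notin> set u0 \<Longrightarrow> Z \<notin> set v0 \<Longrightarrow>
   tt (u0 @ X # Y # v0) = Suc (tt (u0 @ Y # Z # X # v0))"
proof -
  assume a: "Z \<notin> set u0" "Z \<notin> set v0"
  have "tt (u0 @ Y # Z # X # v0) = tt ((u0 @ [Y]) @ Z # (X # v0))" by simp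
  also have "\<dots> = tseg (u0 @ [Y]) + tseg (X # v0)" using a by (simp only: tt_app) (simp add: tt_free)
  finally show ?thesis using a by (simp add: tt_free tseg_step)
qed

lemma tt_step: "tt (u @ [X, Y] @ v) = Suc (tt (u @ [Y, Z, X] @ v))"
proof -
  obtain u0 where u0: "Z \<notin> set u0" "u = u0 \<or> (\<exists>u1. u = u1 @ Z # u0)" using split_last_Z by blast
  obtain v0 where v0: "Z \<notin> set v0" "v = v0 \<or> (\<exists>v1. v = v0 @ Z # v1)" using split_first_Z by blast
  have L: "tt (u0 @ X # Y # v0 @ rest) = Suc (tt (u0 @ Y # Z # X # v0 @ rest))"
    if "rest = [] \<or> (\<exists>v1. rest = Z # v1)" for rest
    using that
  proof
    assume "rest = []" then show ?thesis using tt_free_step[OF u0(1) v0(1)] by simp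
  next
    assume "\<exists>v1. rest = Z # v1"
    then obtain v1 where r: "rest = Z # v1" by blast
    have "tt (u0 @ X # Y # v0 @ rest) = tt ((u0 @ X # Y # v0) @ Z # v1)" using r by simp
    also have "\<dots> = tt (u0 @ X # Y # v0) + tt v1" by (rule tt_app)
    finally have 1: "tt (u0 @ X # Y # v0 @ rest) = tt (u0 @ X # Y # v0) + tt v1" .
    have "tt (u0 @ Y # Z # X # v0 @ rest) = tt ((u0 @ Y # Z # X # v0) @ Z # v1)" using r by simp
    also have "\<dots> = tt (u0 @ Y # Z # X # v0) + tt v1" by (rule tt_app)
    finally show ?thesis using 1 tt_free_step[OF u0(1) v0(1)] by simp
  qed
  obtain rest where rest: "v = v0 @ rest" "rest = [] \<or> (\<exists>v1. rest = Z # v1)" using v0(2) by auto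
  from u0(2) show ?thesis
  proof
    assume "u = u0" then show ?thesis using L[OF rest(2)] rest(1) by simp
  next
    assume "\<exists>u1. u = u1 @ Z # u0"
    then obtain u1 where u1: "u = u1 @ Z # u0" by blast
    have "tt (u @ [X, Y] @ v) = tt (u1 @ Z # (u0 @ X # Y # v0 @ rest))" using u1 rest(1) by simp
    also have "\<dots> = tt u1 + tt (u0 @ X # Y # v0 @ rest)" by (rule tt_app)
    also have "\<dots> = tt u1 + Suc (tt (u0 @ Y # Z # X # v0 @ rest))" using L[OF rest(2)] by simp
    also have "\<dots> = Suc (tt (u1 @ Z # (u0 @ Y # Z # X # v0 @ rest)))"
      by (simp only: tt_app)
    also have "u1 @ Z # (u0 @ Y # Z # X # v0 @ rest) = u @ [Y, Z, X] @ v" using u1 rest(1) by simp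
    finally show ?thesis by simp
  qed
qed

definition FF :: "word \<Rightarrow> nat" where "FF w = length w + tt w"

definition cnt :: "letter \<Rightarrow> word \<Rightarrow> nat" where "cnt c w = length (filter ((=) c) w)"

lemma step_inv: "(a, b) \<in> step \<Longrightarrow> FF a = FF b \<and> cnt X a = cnt X b \<and> cnt Y a = cnt Y b \<and> (a = [] \<longleftrightarrow> b = [])"
  using tt_step by (auto simp: step_def FF_def cnt_def)

lemma eqM_inv: "eqM a b \<Longrightarrow> FF a = FF b \<and> cnt X a = cnt X b \<and> cnt Y a = cnt Y b \<and> (a = [] \<longleftrightarrow> b = [])"
  unfolding eqM_def
proof (induction rule: rtrancl_induct)
  case base then show ?case by simp
next
  case (step y z)
  then have "FF y = FF z \<and> cnt X y = cnt X z \<and> cnt Y y = cnt Y z \<and> (y = [] \<longleftrightarrow> z = [])"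
    using step_inv[of y z] step_inv[of z y] by auto
  then show ?case using step.IH by simp
qed

lemma len_ge_cnt: "cnt X w + cnt Y w \<le> length w"
  by (induction w) (auto simp: cnt_def)

lemma len_le_FF: "length w \<le> FF w" by (simp add: FF_def)

lemma tseg_le: "tseg s \<le> length s - 1"
proof -
  have "length (core s) \<le> length s"
    unfolding core_def by (metis length_dropWhile_le length_rev order_trans)
  then show ?thesis by (simp add: tseg_def)
qed

lemma tt_le: "tt w \<le> length w - 1"
proof (induction "length w" arbitrary: w rule: less_induct)
  case less
  show ?case
  proof (cases "Z \<in> set w")
    case False then show ?thesis using tseg_le by (simp add: tt_free)
  next
    case True
    then obtain u v where w: "w = u @ Z # v" by (meson split_list)
    have "tt u \<le> length u - 1" "tt v \<le> length v - 1" using less w by auto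
    then show ?thesis using w by (simp add: tt_app)
  qed
qed


lemma step_eqM: "(a, b) \<in> step\<^sup>* \<Longrightarrow> eqM b a"
proof -
  assume "(a, b) \<in> step\<^sup>*"
  then have "(b, a) \<in> (step\<inverse>)\<^sup>*" by (simp add: rtrancl_converse)
  moreover have "(step\<inverse>)\<^sup>* \<subseteq> (step \<union> step\<inverse>)\<^sup>*" by (rule rtrancl_mono) blast
  ultimately show ?thesis unfolding eqM_def by blast
qed

lemma stepI: "(u @ [X, Y] @ v, u @ [Y, Z, X] @ v) \<in> step"
  unfolding step_def by blast

lemma concat_rep_Suc: "concat (replicate (Suc j) w) = concat (replicate j w) @ w"
  by (induction j) auto

definition W1 :: "nat \<Rightarrow> nat \<Rightarrow> nat \<Rightarrow> word" where
  "W1 k l j = replicate (k - 1) X @ concat (replicate j [Y, Z]) @ X # replicate (l - j) Y"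

definition W2 :: "nat \<Rightarrow> nat \<Rightarrow> nat \<Rightarrow> word" where
  "W2 k l i = replicate (k - 1 - i) X @ Y # concat (replicate i [Z, X]) @ Z # concat (replicate (l - 1) [Y, Z]) @ [X]"

lemma len_concat_rep: "length (concat (replicate j w)) = j * length w"
  by (induction j) auto

lemma W1_len: "0 < k \<Longrightarrow> j \<le> l \<Longrightarrow> length (W1 k l j) = k + l + j"
  by (simp add: W1_def len_concat_rep)

lemma W2_len: "0 < k \<Longrightarrow> 0 < l \<Longrightarrow> i \<le> k - 1 \<Longrightarrow> length (W2 k l i) = k + 2 * l + i"
  by (simp add: W2_def len_concat_rep)

lemma W1_0: "0 < k \<Longrightarrow> W1 k l 0 = replicate k X @ replicate l Y"
  by (cases k) (simp_all add: W1_def replicate_append_same[symmetric])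

lemma W1_reach: "0 < k \<Longrightarrow> j \<le> l \<Longrightarrow> (replicate k X @ replicate l Y, W1 k l j) \<in> step\<^sup>*"
proof (induction j)
  case 0 then show ?case by (simp add: W1_0)
next
  case (Suc j)
  have "(W1 k l j, W1 k l (Suc j)) \<in> step"
  proof -
    obtain m where m: "l - j = Suc m" "l - Suc j = m" using Suc.prems by (metis Suc_diff_Suc Suc_le_lessD)
    have "W1 k l j = (replicate (k - 1) X @ concat (replicate j [Y, Z])) @ [X, Y] @ replicate m Y"
      using m by (simp add: W1_def)
    moreover have "W1 k l (Suc j) = (replicate (k - 1) X @ concat (replicate j [Y, Z])) @ [Y, Z, X] @ replicate m Y"
      using m by (simp add: W1_def concat_rep_Suc del: replicate_Suc)
    ultimately show ?thesis using stepI by metis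
  qed
  then show ?case using Suc by (meson Suc_leD rtrancl.rtrancl_into_rtrancl)
qed

lemma W2_0: "0 < l \<Longrightarrow> W2 k l 0 = W1 k l l"
  by (cases l) (simp_all add: W1_def W2_def)

lemma W2_reach: "0 < k \<Longrightarrow> 0 < l \<Longrightarrow> i \<le> k - 1 \<Longrightarrow> (replicate k X @ replicate l Y, W2 k l i) \<in> step\<^sup>*"
proof (induction i)
  case 0 then show ?case using W1_reach[of k l l] by (simp add: W2_0)
next
  case (Suc i)
  have "(W2 k l i, W2 k l (Suc i)) \<in> step"
  proof -
    obtain m where m: "k - 1 - i = Suc m" "k - 1 - Suc i = m" using Suc.prems by (metis Suc_diff_Suc Suc_le_lessD)
    define R where "R = concat (replicate i [Z, X]) @ Z # concat (replicate (l - 1) [Y, Z]) @ [X]"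
    have "W2 k l i = replicate m X @ [X, Y] @ R"
      using m by (simp add: W2_def R_def replicate_append_same[symmetric])
    moreover have "W2 k l (Suc i) = replicate m X @ [Y, Z, X] @ R"
      using m by (simp add: W2_def R_def)
    ultimately show ?thesis using stepI by metis
  qed
  then show ?case using Suc by (meson Suc_leD rtrancl.rtrancl_into_rtrancl)
qed

lemma FF_xy: "0 < k \<Longrightarrow> 0 < l \<Longrightarrow> FF (replicate k X @ replicate l Y) = 2 * (k + l) - 1"
proof -
  assume k: "0 < k" and l: "0 < l"
  have "dropWhile (\<lambda>c. c \<noteq> X) (replicate k X @ replicate l Y) = replicate k X @ replicate l Y"
    using k by (cases k) auto
  moreover have "dropWhile (\<lambda>c. c \<noteq> Y) (rev (replicate k X @ replicate l Y)) = rev (replicate k X @ replicate l Y)"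
  proof -
    obtain l' where "l = Suc l'" using l by (cases l) auto
    then have "rev (replicate k X @ replicate l Y) = Y # (replicate l' Y @ replicate k X)"
      by (simp add: replicate_append_same[symmetric])
    then show ?thesis by (simp only:) simp
  qed
  ultimately have "length (core (replicate k X @ replicate l Y)) = k + l" by (simp add: core_def)
  moreover have "Z \<notin> set (replicate k X @ replicate l Y)" by simp
  ultimately show ?thesis using k l by (simp add: FF_def tt_free tseg_def)
qed

lemma cnt_xy: "cnt X (replicate k X @ replicate l Y) = k" "cnt Y (replicate k X @ replicate l Y) = l"
  by (simp_all add: cnt_def)

lemma part1: "0 < k \<Longrightarrow> 0 < l \<Longrightarrow> LM (replicate k X @ replicate l Y) = {k + l .. 2 * (k + l) - 1}"
proof -
  assume k: "0 < k" and l: "0 < l"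
  let ?a = "replicate k X @ replicate l Y"
  show ?thesis
  proof
    show "LM ?a \<subseteq> {k + l .. 2 * (k + l) - 1}"
    proof
      fix n assume "n \<in> LM ?a"
      then obtain b where b: "eqM b ?a" "n = length b" by (auto simp: LM_def)
      have "k + l \<le> n" using eqM_inv[OF b(1)] len_ge_cnt[of b] b(2) by (simp add: cnt_xy)
      moreover have "n \<le> 2 * (k + l) - 1" using eqM_inv[OF b(1)] len_le_FF[of b] b(2) FF_xy[OF k l] by simp
      ultimately show "n \<in> {k + l .. 2 * (k + l) - 1}" by simp
    qed
  next
    show "{k + l .. 2 * (k + l) - 1} \<subseteq> LM ?a"
    proof
      fix n assume n: "n \<in> {k + l .. 2 * (k + l) - 1}"
      show "n \<in> LM ?a"
      proof (cases "n \<le> k + 2 * l")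
        case True
        define j where "j = n - (k + l)"
        have "j \<le> l" "length (W1 k l j) = n" using True n k W1_len[of k j l] by (auto simp: j_def)
        then show ?thesis using step_eqM[OF W1_reach[OF k]] unfolding LM_def by blast
      next
        case False
        define i where "i = n - (k + 2 * l)"
        have "i \<le> k - 1" "length (W2 k l i) = n" using False n k l W2_len[of k l i] by (auto simp: i_def)
        then show ?thesis using step_eqM[OF W2_reach[OF k l]] unfolding LM_def by blast
      qed
    qed
  qed
qed

lemma rho_fin: "finite L \<Longrightarrow> L \<noteq> {} \<Longrightarrow> \<forall>n\<in>L. 0 < n \<Longrightarrow> rho L = ereal (real (Max L) / real (Min L))"
proof -
  assume f: "finite L" and ne: "L \<noteq> {}" and p: "\<forall>n\<in>L. 0 < n"
  have LL: "L \<inter> {0<..} = L" using p by auto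
  have S: "(SUP n\<in>L. ereal (real n)) = ereal (real (Max L))"
  proof (rule antisym)
    show "(SUP n\<in>L. ereal (real n)) \<le> ereal (real (Max L))"
      by (rule SUP_least) (simp add: f)
    show "ereal (real (Max L)) \<le> (SUP n\<in>L. ereal (real n))"
      by (rule SUP_upper) (simp add: f ne)
  qed
  have I: "Inf L = Min L" using f ne by (simp add: cInf_eq_Min)
  have "Min L > 0" using p f ne by simp
  then show ?thesis unfolding rho_def LL S I by simp
qed


lemma part2: "0 < k \<Longrightarrow> 0 < l \<Longrightarrow> rho (LM (replicate k X @ replicate l Y)) = ereal (2 - 1 / real (k + l))"
proof -
  assume k: "0 < k" and l: "0 < l"
  let ?L = "{k + l .. 2 * (k + l) - 1}"
  have mx: "Max ?L = 2 * (k + l) - 1" using k l by (simp add: Max_eq_iff)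
  have mn: "Min ?L = k + l" using k l by (simp add: Min_eq_iff)
  have "rho ?L = ereal (real (2 * (k + l) - 1) / real (k + l))"
    using rho_fin[of ?L] k l mx mn by auto
  also have "real (2 * (k + l) - 1) / real (k + l) = 2 - 1 / real (k + l)"
    using k l by (simp add: of_nat_diff field_simps)
  finally show ?thesis using part1[OF k l] by simp
qed

lemma part3: "2 \<le> n \<Longrightarrow> 0 < k \<Longrightarrow> 0 < l \<Longrightarrow> k + l = n \<Longrightarrow> length a = n \<Longrightarrow>
  rho (LM a) \<le> rho (LM (replicate k X @ replicate l Y))"
proof -
  assume n: "2 \<le> n" and k: "0 < k" and l: "0 < l" and kl: "k + l = n" and a: "length a = n"
  let ?L = "LM a"
  have aL: "n \<in> ?L" using a unfolding LM_def eqM_def by blast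
  have pos: "\<forall>m\<in>?L. 0 < m"
  proof
    fix m assume "m \<in> ?L"
    then obtain b where "eqM b a" "m = length b" by (auto simp: LM_def)
    then show "0 < m" using eqM_inv[of b a] a n by auto
  qed
  have bnd: "\<forall>m\<in>?L. m \<le> FF a"
  proof
    fix m assume "m \<in> ?L"
    then obtain b where "eqM b a" "m = length b" by (auto simp: LM_def)
    then show "m \<le> FF a" using eqM_inv[of b a] len_le_FF[of b] by auto
  qed
  have fin: "finite ?L" using bnd by (meson finite_atMost finite_subset subsetI atMost_iff)
  have ne: "?L \<noteq> {}" using aL by blast
  define m where "m = Min ?L"
  have "m \<in> ?L" using fin ne by (simp add: m_def)
  then obtain b where b: "eqM b a" "m = length b" by (auto simp: LM_def)
  have m0: "0 < m" using pos \<open>m \<in> ?L\<close> by blast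
  have "FF a = FF b" using eqM_inv[OF b(1)] by simp
  also have "\<dots> \<le> m + (m - 1)" using tt_le[of b] b(2) by (simp add: FF_def)
  finally have Mx: "Max ?L \<le> 2 * m - 1" using bnd fin ne m0 by auto
  have mn: "m \<le> n" using fin aL by (simp add: m_def)
  have "real (Max ?L) / real m \<le> real (2 * m - 1) / real m"
    using Mx m0 by (simp add: divide_right_mono)
  also have "\<dots> = 2 - 1 / real m" using m0 by (simp add: of_nat_diff field_simps)
  also have "\<dots> \<le> 2 - 1 / real n" using mn m0 by (simp add: frac_le)
  finally have "rho ?L \<le> ereal (2 - 1 / real n)"
    using rho_fin[OF fin ne pos] by (simp add: m_def)
  then show ?thesis using part2[OF k l] kl by simp
qed

theorem lemma6p2:
  shows "(\<forall>k l. 0 < k \<longrightarrow> 0 < l \<longrightarrow>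
            LM (replicate k X @ replicate l Y) = {k + l .. 2 * (k + l) - 1})
       \<and> (\<forall>k l. 0 < k \<longrightarrow> 0 < l \<longrightarrow>
            rho (LM (replicate k X @ replicate l Y)) = ereal (2 - 1 / real (k + l)))
       \<and> (\<forall>n k l (a::word). 2 \<le> n \<longrightarrow> 0 < k \<longrightarrow> 0 < l \<longrightarrow> k + l = n \<longrightarrow>
            length a = n \<longrightarrow>
            rho (LM a) \<le> rho (LM (replicate k X @ replicate l Y)))"
  using part1 part2 part3 by blast

end
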